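(* Let $K$ be a field of characteristic zero, $L$ a $K$-linear functional on $K[u]$ with moments $\mu_s=L(u^s)$, and assume that all Hankel determinants $H(n)=\det_{0\le i,j\le n-1}(\mu_{i+j})$, $n\ge0$, are non-zero. Let $k,m,n$ be non-negative integers and $x_1,\dots,x_m,y_1,\dots,y_k$ variables. Then the determinant $$\det_{0\le i,j\le n-1}\left(\int u^{i+j}\frac{\prod_{\ell=1}^m(u-x_\ell)}{\prod_{\ell=1}^k(u-y_\ell)}\,d\mu(u)\right)$$ does not vanish identically.
   Context: $\int f(u)\,d\mu(u)$ denotes $L(f)$; the factors $\frac1{u-y_\ell}$ are expanded as $-\sum_{i\ge0}u^iy_\ell^{-i-1}$ (formal power series in $1/y_\ell$) and $L$ is applied coefficientwise, so the determinant is a formal series in $x_1,\dots,x_m$ and $1/y_1,\dots,1/y_k$ (alternatively the integrals may be read analytically for a measure $d\mu$). *)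

theory Defs
  imports "HOL-Library.Poly_Mapping" "HOL-Computational_Algebra.Polynomial"
    "HOL-Combinatorics.Permutations" "Jordan_Normal_Form.Determinant"
begin

text \<open>Multivariate formal power series over a coefficient ring, given by their
 coefficient functions on monomials (finitely supported exponent vectors).
 Variables are of type nat + nat: Inl l stands for x_(l+1), Inr l stands for
 the variable 1/y_(l+1).\<close>

type_synonym ('v, 'a) mps = "('v \<Rightarrow>\<^sub>0 nat) \<Rightarrow> 'a"

definition mps_one :: "('v, 'a::comm_ring_1) mps" where
  "mps_one \<alpha> = (if \<alpha> = 0 then 1 else 0)"

definition mps_mult :: "('v, 'a::comm_ring_1) mps \<Rightarrow> ('v, 'a) mps \<Rightarrow> ('v, 'a) mps" where
  "mps_mult f g \<alpha> = (\<Sum>(\<beta>, \<gamma>) \<in> {(\<beta>, \<gamma>). \<beta> + \<gamma> = \<alpha>}. f \<beta> * g \<gamma>)"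

definition mps_prod_list :: "('v, 'a::comm_ring_1) mps list \<Rightarrow> ('v, 'a) mps" where
  "mps_prod_list fs = foldr mps_mult fs mps_one"

definition mps_det :: "nat \<Rightarrow> (nat \<Rightarrow> nat \<Rightarrow> ('v, 'a::comm_ring_1) mps) \<Rightarrow> ('v, 'a) mps" where
  "mps_det n A \<alpha> = (\<Sum>p \<in> {p. p permutes {..<n}}.
      of_int (sign p) * mps_prod_list (map (\<lambda>i. A i (p i)) [0..<n]) \<alpha>)"

definition Lfun :: "(nat \<Rightarrow> 'a::comm_ring_1) \<Rightarrow> 'a poly \<Rightarrow> 'a" where
  "Lfun \<mu> p = (\<Sum>s\<le>degree p. coeff p s * \<mu> s)"

text \<open>Factors of the integrand, as series in x, 1/y with coefficients in K[u].\<close>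
definition u_pow :: "nat \<Rightarrow> (nat + nat, 'a::comm_ring_1 poly) mps" where
  "u_pow s \<alpha> = (if \<alpha> = 0 then monom 1 s else 0)"

definition x_factor :: "nat \<Rightarrow> (nat + nat, 'a::comm_ring_1 poly) mps" where
  "x_factor l \<alpha> = (if \<alpha> = 0 then [:0, 1:]
      else if \<alpha> = Poly_Mapping.single (Inl l) 1 then -1 else 0)"

text \<open>1/(u - y_(l+1)) expanded as - sum_(i>=0) u^i y_(l+1)^(-i-1).\<close>
definition y_factor :: "nat \<Rightarrow> (nat + nat, 'a::comm_ring_1 poly) mps" where
  "y_factor l \<alpha> = (if \<exists>i. \<alpha> = Poly_Mapping.single (Inr l) (i + 1)
      then - monom 1 (Poly_Mapping.lookup \<alpha> (Inr l) - 1) else 0)"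

text \<open>The matrix entry: integral of u^(i+j) prod(u - x_l) / prod(u - y_l),
 with L applied coefficientwise.\<close>
definition entry :: "(nat \<Rightarrow> 'a::comm_ring_1) \<Rightarrow> nat \<Rightarrow> nat \<Rightarrow> nat \<Rightarrow> nat \<Rightarrow> (nat + nat, 'a) mps" where
  "entry \<mu> m k i j = (\<lambda>\<alpha>. Lfun \<mu> (mps_prod_list
      ([u_pow (i + j)] @ map x_factor [0..<m] @ map y_factor [0..<k]) \<alpha>))"

definition hankel :: "(nat \<Rightarrow> 'a::comm_ring_1) \<Rightarrow> nat \<Rightarrow> 'a" where
  "hankel \<mu> n = det (mat n n (\<lambda>(i, j). \<mu> (i + j)))"

end

theory Submission
  imports Defs
begin

definition good :: "('b + 'c, 'a::comm_ring_1) mps \<Rightarrow> ('b + 'c \<Rightarrow>\<^sub>0 nat) \<Rightarrow> bool" where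
  "good f c = (\<forall>\<beta>. f \<beta> \<noteq> 0 \<longrightarrow> (\<forall>l. Poly_Mapping.lookup \<beta> (Inl l) \<le> Poly_Mapping.lookup c (Inl l))
      \<and> (\<forall>l. Poly_Mapping.lookup c (Inr l) \<le> Poly_Mapping.lookup \<beta> (Inr l)))"

lemma finite_le_pm:
  fixes \<alpha> :: "'v \<Rightarrow>\<^sub>0 nat"
  shows "finite {\<beta>. \<forall>v. Poly_Mapping.lookup \<beta> v \<le> Poly_Mapping.lookup \<alpha> v}"
proof -
  let ?K = "Poly_Mapping.keys \<alpha>"
  let ?S = "{\<beta>. \<forall>v. Poly_Mapping.lookup \<beta> v \<le> Poly_Mapping.lookup \<alpha> v}"
  let ?r = "\<lambda>\<beta>. restrict (Poly_Mapping.lookup \<beta>) ?K"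
  have "?r ` ?S \<subseteq> PiE ?K (\<lambda>v. {..Poly_Mapping.lookup \<alpha> v})" by auto
  hence fin: "finite (?r ` ?S)" by (rule finite_subset) (auto intro: finite_PiE)
  have "inj_on ?r ?S"
  proof (rule inj_onI)
    fix x y assume x: "x \<in> ?S" and y: "y \<in> ?S" and e: "?r x = ?r y"
    show "x = y"
    proof (rule poly_mapping_eqI)
      fix v show "Poly_Mapping.lookup x v = Poly_Mapping.lookup y v"
      proof (cases "v \<in> ?K")
        case True then show ?thesis using fun_cong[OF e, of v] by simp
      next
        case False then show ?thesis using x y by (auto simp: in_keys_iff) (metis le_zero_eq)
      qed
    qed
  qed
  then show ?thesis using fin finite_imageD by blast
qed

lemma finite_decomp:
  fixes \<alpha> :: "'v \<Rightarrow>\<^sub>0 nat"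
  shows "finite {(\<beta>, \<gamma>). \<beta> + \<gamma> = \<alpha>}"
proof -
  let ?S = "{(\<beta>, \<gamma>). \<beta> + \<gamma> = \<alpha>}"
  have "inj_on fst ?S" by (rule inj_onI) auto
  moreover have "fst ` ?S \<subseteq> {\<beta>. \<forall>v. Poly_Mapping.lookup \<beta> v \<le> Poly_Mapping.lookup \<alpha> v}"
    by (auto simp: lookup_add)
  hence "finite (fst ` ?S)" using finite_le_pm finite_subset by blast
  ultimately show ?thesis using finite_imageD by blast
qed

lemma mult_step:
  assumes f: "good f c" and g: "good g d"
  shows "good (mps_mult f g) (c + d) \<and> mps_mult f g (c + d) = f c * g d"
proof
  show "good (mps_mult f g) (c + d)"
    unfolding good_def
  proof (intro allI impI)
    fix \<alpha> assume "mps_mult f g \<alpha> \<noteq> 0"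
    then have "\<exists>x \<in> {(\<beta>, \<gamma>). \<beta> + \<gamma> = \<alpha>}. (\<lambda>(\<beta>, \<gamma>). f \<beta> * g \<gamma>) x \<noteq> 0"
      unfolding mps_mult_def using sum.not_neutral_contains_not_neutral by blast
    then obtain \<beta> \<gamma> where bg: "\<beta> + \<gamma> = \<alpha>" "f \<beta> * g \<gamma> \<noteq> 0" by auto
    hence "f \<beta> \<noteq> 0" "g \<gamma> \<noteq> 0" by auto
    with f g bg(1) show "(\<forall>l. Poly_Mapping.lookup \<alpha> (Inl l) \<le> Poly_Mapping.lookup (c + d) (Inl l))
      \<and> (\<forall>l. Poly_Mapping.lookup (c + d) (Inr l) \<le> Poly_Mapping.lookup \<alpha> (Inr l))"
      unfolding good_def by (auto simp: lookup_add add_mono)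
  qed
next
  let ?S = "{(\<beta>, \<gamma>). \<beta> + \<gamma> = c + d}"
  let ?h = "\<lambda>(\<beta>, \<gamma>). f \<beta> * g \<gamma>"
  have z: "?h x = 0" if "x \<in> ?S - {(c, d)}" for x
  proof (rule ccontr)
    obtain \<beta> \<gamma> where x: "x = (\<beta>, \<gamma>)" by fastforce
    assume "?h x \<noteq> 0"
    hence nz: "f \<beta> \<noteq> 0" "g \<gamma> \<noteq> 0" using x by auto
    have bgcd: "\<beta> + \<gamma> = c + d" using that x by auto
    have s: "Poly_Mapping.lookup \<beta> v + Poly_Mapping.lookup \<gamma> v = Poly_Mapping.lookup c v + Poly_Mapping.lookup d v" for v
      using bgcd by (metis lookup_add)
    have "Poly_Mapping.lookup \<beta> v = Poly_Mapping.lookup c v \<and> Poly_Mapping.lookup \<gamma> v = Poly_Mapping.lookup d v" for v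
    proof (cases v)
      case (Inl l)
      have "Poly_Mapping.lookup \<beta> v \<le> Poly_Mapping.lookup c v" "Poly_Mapping.lookup \<gamma> v \<le> Poly_Mapping.lookup d v"
        using f g nz Inl unfolding good_def by auto
      then show ?thesis using s[of v] by linarith
    next
      case (Inr l)
      have "Poly_Mapping.lookup c v \<le> Poly_Mapping.lookup \<beta> v" "Poly_Mapping.lookup d v \<le> Poly_Mapping.lookup \<gamma> v"
        using f g nz Inr unfolding good_def by auto
      then show ?thesis using s[of v] by linarith
    qed
    hence "\<beta> = c" "\<gamma> = d" by (auto intro: poly_mapping_eqI)
    thus False using that x by auto
  qed
  have "mps_mult f g (c + d) = sum ?h ?S" unfolding mps_mult_def by simp
  also have "\<dots> = sum ?h {(c, d)}"
    by (rule sum.mono_neutral_right) (use finite_decomp z in auto)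
  finally show "mps_mult f g (c + d) = f c * g d" by simp
qed

lemma good_one: "good mps_one 0"
  unfolding good_def mps_one_def by auto

lemma prod_step:
  assumes "\<forall>(f, c) \<in> set fcs. good f c"
  shows "good (mps_prod_list (map fst fcs)) (sum_list (map snd fcs)) \<and>
    mps_prod_list (map fst fcs) (sum_list (map snd fcs)) = prod_list (map (\<lambda>(f, c). f c) fcs)"
  using assms
proof (induction fcs)
  case Nil
  then show ?case using good_one by (simp add: mps_prod_list_def) (simp add: mps_one_def)
next
  case (Cons fc fcs)
  obtain f c where fc: "fc = (f, c)" by fastforce
  have "good f c" using Cons.prems fc by auto
  from mult_step[OF this conjunct1[OF Cons.IH]] Cons.IH Cons.prems
  show ?case using fc by (auto simp: mps_prod_list_def)
qed


lemma good_u_pow: "good (u_pow s) 0"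
  unfolding good_def u_pow_def by auto

lemma good_x: "good (x_factor l) (Poly_Mapping.single (Inl l) 1)"
  unfolding good_def x_factor_def by (auto simp: lookup_single when_def)

lemma good_y: "good (y_factor l) (Poly_Mapping.single (Inr l) 1)"
  unfolding good_def y_factor_def by (auto simp: lookup_single when_def)

lemma x_val: "x_factor l (Poly_Mapping.single (Inl l) 1) = -1"
proof -
  have nz: "Poly_Mapping.single (Inl l) (1::nat) \<noteq> 0"
    by (metis lookup_single_eq lookup_zero one_neq_zero)
  then show ?thesis unfolding x_factor_def if_not_P[OF nz] by simp
qed

lemma y_val: "y_factor l (Poly_Mapping.single (Inr l) 1) = -1"
  unfolding y_factor_def
  by (auto simp: monom_0 one_pCons)

lemma x_val': "x_factor l (Poly_Mapping.single (Inl l) (Suc 0)) = -1"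
  using x_val by simp

lemma y_val': "y_factor l (Poly_Mapping.single (Inr l) (Suc 0)) = -1"
  using y_val by simp

lemma Lfun_monom: "Lfun \<mu> (monom a s) = a * \<mu> s"
  unfolding Lfun_def
proof (cases "a = 0")
  case True then show "(\<Sum>t\<le>degree (monom a s). coeff (monom a s) t * \<mu> t) = a * \<mu> s" by simp
next
  case False
  have "(\<Sum>t\<le>s. (if s = t then a else 0) * \<mu> t) = (\<Sum>t\<le>s. if t = s then a * \<mu> t else 0)"
    by (rule sum.cong) auto
  with False show "(\<Sum>t\<le>degree (monom a s). coeff (monom a s) t * \<mu> t) = a * \<mu> s"
    by (simp add: degree_monom_eq coeff_monom when_def)
qed

lemma Lfun_zero: "Lfun \<mu> 0 = 0"
  unfolding Lfun_def by simp

lemma sign_poly: "(monom (1::'a::comm_ring_1) s) * (\<Prod>l\<leftarrow>[0..<m]. -1) * (\<Prod>l\<leftarrow>[0..<k]. -1)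
   = monom ((-1) ^ (m + k)) s"
proof -
  have e: "(\<Prod>l\<leftarrow>[0..<q]. (-1::'a poly)) = (-1) ^ q" for q
    by (induction q) auto
  have h: "(-1::'a poly) ^ q = monom ((-1) ^ q) 0" for q
    by (induction q) (auto simp: monom_0 one_pCons)
  show ?thesis unfolding e h mult_monom
    by (simp add: power_add)
qed

definition C1 :: "nat \<Rightarrow> nat \<Rightarrow> (nat + nat) \<Rightarrow>\<^sub>0 nat" where
  "C1 m k = sum_list (map (\<lambda>l. Poly_Mapping.single (Inl l) 1) [0..<m]
      @ map (\<lambda>l. Poly_Mapping.single (Inr l) 1) [0..<k])"

lemma entry_props:
  fixes \<mu> :: "nat \<Rightarrow> 'a::comm_ring_1"
  shows "good (entry \<mu> m k i j) (C1 m k) \<and> entry \<mu> m k i j (C1 m k) = (-1) ^ (m + k) * \<mu> (i + j)"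
proof -
  define fcs where "fcs = (u_pow (i + j) :: (nat + nat, 'a poly) mps, 0 :: (nat + nat) \<Rightarrow>\<^sub>0 nat)
     # map (\<lambda>l. (x_factor l, Poly_Mapping.single (Inl l) (1::nat))) [0..<m]
     @ map (\<lambda>l. (y_factor l, Poly_Mapping.single (Inr l) (1::nat))) [0..<k]"
  have g: "\<forall>(f, c) \<in> set fcs. good f (c :: (nat + nat) \<Rightarrow>\<^sub>0 nat)"
    unfolding fcs_def using good_u_pow good_x good_y by auto
  have f1: "map fst fcs = [u_pow (i + j)] @ map x_factor [0..<m] @ map y_factor [0..<k]"
    unfolding fcs_def by simp
  have f2: "sum_list (map snd fcs) = C1 m k"
    unfolding fcs_def C1_def by (simp add: o_def)
  have f3: "prod_list (map (\<lambda>(f, c). f c) fcs) = monom ((-1) ^ (m + k)) (i + j)"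
    unfolding fcs_def using sign_poly[of "i + j" m k]
    by (simp add: o_def x_val y_val x_val' y_val' u_pow_def mult.assoc)
  note P = prod_step[OF g, unfolded f1 f2 f3]
  show ?thesis
  proof
    show "good (entry \<mu> m k i j) (C1 m k)"
      using conjunct1[OF P] unfolding good_def entry_def by (metis Lfun_zero)
    show "entry \<mu> m k i j (C1 m k) = (-1) ^ (m + k) * \<mu> (i + j)"
      using conjunct2[OF P] unfolding entry_def by (simp add: Lfun_monom)
  qed
qed

theorem lemma10:
  fixes \<mu> :: "nat \<Rightarrow> 'a::field_char_0" and k m n :: nat
  assumes "\<forall>N. hankel \<mu> N \<noteq> 0"
  shows "mps_det n (entry \<mu> m k) \<noteq> (\<lambda>_. 0)"
proof
  assume Z: "mps_det n (entry \<mu> m k) = (\<lambda>_. 0)"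
  define A where "A = entry \<mu> m k"
  define e :: 'a where "e = (-1) ^ (m + k)"
  define \<alpha> where "\<alpha> = sum_list (map (\<lambda>i. C1 m k) [0..<n])"
  have tm: "mps_prod_list (map (\<lambda>i. A i (p i)) [0..<n]) \<alpha> = (\<Prod>i\<in>{0..<n}. e * \<mu> (i + p i))" for p
  proof -
    define fcs where "fcs = map (\<lambda>i. (A i (p i), C1 m k)) [0..<n]"
    have g: "\<forall>(f, c) \<in> set fcs. good f c"
      unfolding fcs_def A_def by (auto simp: entry_props)
    have "mps_prod_list (map (\<lambda>i. A i (p i)) [0..<n]) \<alpha> = prod_list (map (\<lambda>(f, c). f c) fcs)"
      using conjunct2[OF prod_step[OF g]] unfolding fcs_def \<alpha>_def by (simp add: o_def)
    also have "\<dots> = prod_list (map (\<lambda>i. e * \<mu> (i + p i)) [0..<n])"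
      unfolding fcs_def A_def e_def by (simp add: o_def entry_props)
    also have "\<dots> = (\<Prod>i\<in>{0..<n}. e * \<mu> (i + p i))"
      using prod.distinct_set_conv_list[of "[0..<n]" "\<lambda>i. e * \<mu> (i + p i)"] by simp
    finally show ?thesis .
  qed
  have "mps_det n A \<alpha> = (\<Sum>p \<in> {p. p permutes {..<n}}. of_int (sign p) * (\<Prod>i\<in>{0..<n}. e * \<mu> (i + p i)))"
    unfolding mps_det_def tm by simp
  also have "\<dots> = det (mat n n (\<lambda>(i, j). e * \<mu> (i + j)))"
    unfolding det_def
    by (auto simp: atLeast0LessThan intro!: sum.cong prod.cong arg_cong2[where f = "(*)"]
        dest: permutes_in_image)
  also have "mat n n (\<lambda>(i, j). e * \<mu> (i + j)) = e \<cdot>\<^sub>m mat n n (\<lambda>(i, j). \<mu> (i + j))"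
    by auto
  also have "det \<dots> = e ^ n * hankel \<mu> n"
    unfolding hankel_def by simp
  finally have "mps_det n A \<alpha> = e ^ n * hankel \<mu> n" .
  moreover have "e ^ n * hankel \<mu> n \<noteq> 0"
    using assms unfolding e_def by simp
  ultimately show False using Z unfolding A_def by simp
qed

end
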